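(* For every $\delta>0$ and every finite set $A=\{a_1,\dots,a_m\}\subset\mathbb{R}^n$ there is $p_0(A,\delta)$ such that for every prime $p\ge p_0(A,\delta)$ there exist $N\ge n$ and a Euclidean sub-$p$-toral set $S=\{s_1,\dots,s_m\}\subset\mathbb{R}^N$ with $|a_i-s_i|<\delta$ for all $i$, where $\mathbb{R}^n\subset\mathbb{R}^N$ via the standard inclusion.
   Context: A $p$-torus is a group isomorphic to $(\mathbb{Z}_p)^\alpha$ for some $\alpha\ge1$. A set $X\subset\mathbb{R}^k$ is Euclidean sub-$p$-toral if there exist $n\ge k$, a $p$-torus $G$ and an action of $G$ on $\mathbb{R}^n$ by isometries such that $X$ (viewed in $\mathbb{R}^n$ via the standard inclusion $\mathbb{R}^k\subset\mathbb{R}^n$) is contained in a single $G$-orbit. *)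

theory Defs
  imports Complex_Main "HOL-Algebra.Group_Action" "HOL-Computational_Algebra.Primes"
begin

text \<open>Euclidean space R^k, realised as real sequences vanishing from index k on;
  the standard inclusion R^k \<subseteq> R^n (k \<le> n) is then literally set inclusion.\<close>
definition euclid :: "nat \<Rightarrow> (nat \<Rightarrow> real) set" where
  "euclid k = {x. \<forall>i\<ge>k. x i = 0}"

definition edist :: "nat \<Rightarrow> (nat \<Rightarrow> real) \<Rightarrow> (nat \<Rightarrow> real) \<Rightarrow> real" where
  "edist k x y = sqrt (\<Sum>i<k. (x i - y i)^2)"

definition Zp_power :: "nat \<Rightarrow> nat \<Rightarrow> (nat \<Rightarrow> nat) monoid" where
  "Zp_power p \<alpha> = \<lparr> carrier = {f. (\<forall>i<\<alpha>. f i < p) \<and> (\<forall>i\<ge>\<alpha>. f i = 0)},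
                     monoid.mult = (\<lambda>f g i. (f i + g i) mod p),
                     monoid.one = (\<lambda>i. 0) \<rparr>"

definition p_torus :: "nat \<Rightarrow> ('g, 'x) monoid_scheme \<Rightarrow> bool" where
  "p_torus p G \<longleftrightarrow> group G \<and> (\<exists>\<alpha>\<ge>1. G \<cong> Zp_power p \<alpha>)"

definition isometric_action :: "('g, 'x) monoid_scheme \<Rightarrow> nat \<Rightarrow> ('g \<Rightarrow> (nat \<Rightarrow> real) \<Rightarrow> (nat \<Rightarrow> real)) \<Rightarrow> bool" where
  "isometric_action G n \<phi> \<longleftrightarrow> group_action G (euclid n) \<phi> \<and>
     (\<forall>g\<in>carrier G. \<forall>x\<in>euclid n. \<forall>y\<in>euclid n. edist n (\<phi> g x) (\<phi> g y) = edist n x y)"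

text \<open>X \<subseteq> R^k is Euclidean sub-p-toral. The group type is fixed to nat \<Rightarrow> nat, which is
  no loss since every p-torus is isomorphic to a group of that type.\<close>
definition sub_p_toral :: "nat \<Rightarrow> nat \<Rightarrow> (nat \<Rightarrow> real) set \<Rightarrow> bool" where
  "sub_p_toral p k X \<longleftrightarrow> X \<subseteq> euclid k \<and>
     (\<exists>n\<ge>k. \<exists>G :: (nat \<Rightarrow> nat) monoid. \<exists>\<phi>. p_torus p G \<and> isometric_action G n \<phi> \<and>
        (\<exists>x\<in>euclid n. X \<subseteq> orbit G \<phi> x))"

end

theory Submission
  imports Defs "HOL-Analysis.L2_Norm"
begin

lemma Zp_group:
  assumes "p > 0"
  shows "group (Zp_power p \<alpha>)"
proof (rule groupI)
  fix x y assume "x \<in> carrier (Zp_power p \<alpha>)" "y \<in> carrier (Zp_power p \<alpha>)"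
  then show "x \<otimes>\<^bsub>Zp_power p \<alpha>\<^esub> y \<in> carrier (Zp_power p \<alpha>)"
    using assms by (auto simp: Zp_power_def)
next
  show "\<one>\<^bsub>Zp_power p \<alpha>\<^esub> \<in> carrier (Zp_power p \<alpha>)" using assms by (simp add: Zp_power_def)
next
  fix x y z assume "x \<in> carrier (Zp_power p \<alpha>)" "y \<in> carrier (Zp_power p \<alpha>)" "z \<in> carrier (Zp_power p \<alpha>)"
  show "x \<otimes>\<^bsub>Zp_power p \<alpha>\<^esub> y \<otimes>\<^bsub>Zp_power p \<alpha>\<^esub> z = x \<otimes>\<^bsub>Zp_power p \<alpha>\<^esub> (y \<otimes>\<^bsub>Zp_power p \<alpha>\<^esub> z)"
    by (auto simp: Zp_power_def mod_add_left_eq mod_add_right_eq add.assoc)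
next
  fix x assume x: "x \<in> carrier (Zp_power p \<alpha>)"
  show "\<one>\<^bsub>Zp_power p \<alpha>\<^esub> \<otimes>\<^bsub>Zp_power p \<alpha>\<^esub> x = x"
  proof
    fix i show "(\<one>\<^bsub>Zp_power p \<alpha>\<^esub> \<otimes>\<^bsub>Zp_power p \<alpha>\<^esub> x) i = x i"
      using x by (cases "i < \<alpha>") (auto simp: Zp_power_def)
  qed
next
  fix x assume x: "x \<in> carrier (Zp_power p \<alpha>)"
  define y where "y = (\<lambda>i. if i < \<alpha> then (p - x i) mod p else 0)"
  have "y \<in> carrier (Zp_power p \<alpha>)" using assms by (auto simp: Zp_power_def y_def)
  moreover have "y \<otimes>\<^bsub>Zp_power p \<alpha>\<^esub> x = \<one>\<^bsub>Zp_power p \<alpha>\<^esub>"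
  proof
    fix i show "(y \<otimes>\<^bsub>Zp_power p \<alpha>\<^esub> x) i = \<one>\<^bsub>Zp_power p \<alpha>\<^esub> i"
      using x by (cases "i < \<alpha>") (auto simp: Zp_power_def y_def mod_add_left_eq)
  qed
  ultimately show "\<exists>y\<in>carrier (Zp_power p \<alpha>). y \<otimes>\<^bsub>Zp_power p \<alpha>\<^esub> x = \<one>\<^bsub>Zp_power p \<alpha>\<^esub>" by blast
qed

definition ang :: "nat \<Rightarrow> nat \<Rightarrow> real" where "ang p m = 2*pi*real m / real p"

lemma cos_per: "cos (x + 2*pi*of_int m) = cos x"
  using cos_int_2pin[of m] sin_int_2pin[of m] by (simp add: cos_add mult.assoc)
lemma sin_per: "sin (x + 2*pi*of_int m) = sin x"
  using cos_int_2pin[of m] sin_int_2pin[of m] by (simp add: sin_add mult.assoc)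

lemma ang_add_mod:
  assumes "p > 0"
  shows "cos (ang p ((a + b) mod p)) = cos (ang p a + ang p b)"
    and "sin (ang p ((a + b) mod p)) = sin (ang p a + ang p b)"
proof -
  have e: "real (a+b) = real ((a+b) mod p) + real p * real ((a+b) div p)"
    by (metis mod_div_mult_eq of_nat_add of_nat_mult add.commute mult.commute)
  have "ang p a + ang p b = 2*pi*real(a+b)/p" by (simp add: ang_def add_divide_distrib ring_distribs)
  also have "\<dots> = 2*pi*(real ((a+b) mod p) + real p * real ((a+b) div p))/p" by (simp only: e)
  also have "\<dots> = ang p ((a+b) mod p) + 2*pi*of_int (int ((a+b) div p))"
    using assms unfolding ang_def by (simp add: field_simps)
  finally have "ang p a + ang p b = ang p ((a+b) mod p) + 2*pi*of_int (int ((a+b) div p))" .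
  then show "cos (ang p ((a + b) mod p)) = cos (ang p a + ang p b)"
    and "sin (ang p ((a + b) mod p)) = sin (ang p a + ang p b)"
    by (simp_all only: cos_per sin_per)
qed

definition rotact :: "nat \<Rightarrow> nat \<Rightarrow> real \<Rightarrow> (nat\<Rightarrow>nat) \<Rightarrow> (nat\<Rightarrow>real) \<Rightarrow> (nat\<Rightarrow>real)" where
"rotact p n R k = (\<lambda>x \<in> euclid (2*n). (\<lambda>i. if i < n then cos (ang p (k i)) * x i - sin (ang p (k i)) * (x (n+i) - R)
      else if i < 2*n then R + sin (ang p (k (i-n))) * x (i-n) + cos (ang p (k (i-n))) * (x i - R) else x i))"

lemma rotact_in: "x \<in> euclid (2*n) \<Longrightarrow> rotact p n R k x \<in> euclid (2*n)"
  by (auto simp: rotact_def euclid_def)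

lemma rotact_comp:
  assumes "p > 0" "x \<in> euclid (2*n)"
  shows "rotact p n R (\<lambda>i. (k i + l i) mod p) x = rotact p n R k (rotact p n R l x)"
proof
  fix i
  have xin: "rotact p n R l x \<in> euclid (2*n)" using rotact_in assms(2) by blast
  show "rotact p n R (\<lambda>i. (k i + l i) mod p) x i = rotact p n R k (rotact p n R l x) i"
  proof (cases "i < n")
    case True
    then show ?thesis using assms xin
      by (simp add: rotact_def ang_add_mod cos_add sin_add algebra_simps)
  next
    case False
    show ?thesis
    proof (cases "i < 2*n")
      case True
      then obtain j where j: "i = n + j" "j < n" using False by (metis add_diff_inverse_nat less_diff_conv2 mult_2 not_less le_refl)
      then show ?thesis using assms xin
        by (simp add: rotact_def ang_add_mod cos_add sin_add algebra_simps)
    next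
      case F2: False
      then show ?thesis using assms xin False by (simp add: rotact_def)
    qed
  qed
qed

lemma rotact_one:
  assumes "x \<in> euclid (2*n)"
  shows "rotact p n R (\<lambda>i. 0) x = x"
  using assms by (auto simp: rotact_def ang_def)

lemma sum_split2: fixes n m :: nat shows "(\<Sum>i<n+m. f i) = (\<Sum>i<n. f i) + (\<Sum>i<m. f (n+i)::real)"
  by (induction m) auto

lemma rot_sq:
  fixes c s u w :: real
  assumes "c^2 + s^2 = 1"
  shows "(c*u - s*w)^2 + (s*u + c*w)^2 = u^2 + w^2"
proof -
  have "(c*u - s*w)^2 + (s*u + c*w)^2 = (c^2 + s^2)*(u^2 + w^2)" by algebra
  then show ?thesis using assms by simp
qed

lemma rotact_isom:
  assumes "x \<in> euclid (2*n)" "y \<in> euclid (2*n)"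
  shows "edist (2*n) (rotact p n R k x) (rotact p n R k y) = edist (2*n) x y"
proof -
  let ?f = "\<lambda>i. (rotact p n R k x i - rotact p n R k y i)^2"
  let ?g = "\<lambda>i. (x i - y i)^2"
  have "(\<Sum>i<2*n. ?f i) = (\<Sum>i<n. ?f i + ?f (n+i))"
    using sum_split2[of ?f n n] by (simp add: mult_2 sum.distrib)
  also have "\<dots> = (\<Sum>i<n. ?g i + ?g (n+i))"
  proof (rule sum.cong)
    fix i assume "i \<in> {..<n}"
    then have i: "i < n" by simp
    let ?c = "cos (ang p (k i))" and ?s = "sin (ang p (k i))"
    have "?f i + ?f (n+i) = (?c*(x i - y i) - ?s*(x (n+i) - y (n+i)))^2 + (?s*(x i - y i) + ?c*(x (n+i) - y (n+i)))^2"
      using i assms by (simp add: rotact_def algebra_simps)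
    also have "\<dots> = ?g i + ?g (n+i)" by (rule rot_sq) simp
    finally show "?f i + ?f (n+i) = ?g i + ?g (n+i)" .
  qed simp
  also have "\<dots> = (\<Sum>i<2*n. ?g i)"
    using sum_split2[of ?g n n] by (simp add: mult_2 sum.distrib)
  finally show ?thesis unfolding edist_def by simp
qed


lemma rotact_action:
  assumes "p > 0"
  shows "group_action (Zp_power p \<alpha>) (euclid (2*n)) (rotact p n R)"
proof -
  let ?G = "Zp_power p \<alpha>" and ?E = "euclid (2*n)"
  have grp: "group ?G" using Zp_group assms by blast
  have comp: "rotact p n R (k \<otimes>\<^bsub>?G\<^esub> l) x = rotact p n R k (rotact p n R l x)" if "x \<in> ?E" for k l x
    using rotact_comp[OF assms that] by (simp add: Zp_power_def)
  have one: "rotact p n R \<one>\<^bsub>?G\<^esub> x = x" if "x \<in> ?E" for x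
    using rotact_one[OF that] by (simp add: Zp_power_def)
  have bij: "rotact p n R k \<in> Bij ?E" if k: "k \<in> carrier ?G" for k
  proof -
    let ?k' = "inv\<^bsub>?G\<^esub> k"
    have k': "?k' \<in> carrier ?G" using grp k by (simp add: group.inv_closed)
    have "bij_betw (rotact p n R k) ?E ?E"
    proof (rule bij_betwI[where g = "rotact p n R ?k'"])
      show "rotact p n R k \<in> ?E \<rightarrow> ?E" using rotact_in by blast
      show "rotact p n R ?k' \<in> ?E \<rightarrow> ?E" using rotact_in by blast
      fix x assume x: "x \<in> ?E"
      show "rotact p n R ?k' (rotact p n R k x) = x"
        using comp[OF x, of ?k' k, symmetric] one[OF x] grp k by (simp add: group.l_inv)
      show "rotact p n R k (rotact p n R ?k' x) = x"
        using comp[OF x, of k ?k', symmetric] one[OF x] grp k by (simp add: group.r_inv)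
    qed
    then show ?thesis unfolding Bij_def by (simp add: rotact_def)
  qed
  have hom: "rotact p n R \<in> hom ?G (BijGroup ?E)"
  proof (rule homI)
    fix k assume "k \<in> carrier ?G" then show "rotact p n R k \<in> carrier (BijGroup ?E)"
      using bij by (simp add: BijGroup_def)
  next
    fix k l assume k: "k \<in> carrier ?G" and l: "l \<in> carrier ?G"
    have kl: "k \<otimes>\<^bsub>?G\<^esub> l \<in> carrier ?G" using grp k l by (simp add: group.is_monoid monoid.m_closed)
    show "rotact p n R (k \<otimes>\<^bsub>?G\<^esub> l) = rotact p n R k \<otimes>\<^bsub>BijGroup ?E\<^esub> rotact p n R l"
    proof -
      have "rotact p n R (k \<otimes>\<^bsub>?G\<^esub> l) = compose ?E (rotact p n R k) (rotact p n R l)"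
      proof
        fix x show "rotact p n R (k \<otimes>\<^bsub>?G\<^esub> l) x = compose ?E (rotact p n R k) (rotact p n R l) x"
          using comp[of x k l] by (cases "x \<in> ?E") (simp_all add: compose_def rotact_def)
      qed
      then show ?thesis using bij[OF k] bij[OF l] by (simp add: BijGroup_def)
    qed
  qed
  show ?thesis unfolding group_action_def group_hom_def group_hom_axioms_def
    using grp group_BijGroup hom by blast
qed

lemma sin_lip: fixes a b :: real shows "\<bar>sin a - sin b\<bar> \<le> \<bar>a - b\<bar>"
proof -
  have "\<bar>sin a - sin b\<bar> = 2 * \<bar>sin ((a - b)/2)\<bar> * \<bar>cos ((a+b)/2)\<bar>"
    by (simp add: sin_diff_sin abs_mult)
  also have "\<dots> \<le> 2 * \<bar>(a-b)/2\<bar> * 1"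
    by (intro mult_mono abs_sin_x_le_abs_x) auto
  finally show ?thesis by simp
qed

lemma cos_lip: fixes a b :: real shows "\<bar>cos a - cos b\<bar> \<le> \<bar>a - b\<bar>"
proof -
  have "\<bar>cos a - cos b\<bar> = 2 * \<bar>sin ((a + b)/2)\<bar> * \<bar>sin ((b - a)/2)\<bar>"
    by (simp add: cos_diff_cos abs_mult)
  also have "\<dots> \<le> 2 * 1 * \<bar>(b-a)/2\<bar>"
    by (intro mult_mono abs_sin_x_le_abs_x) auto
  finally show ?thesis by simp
qed

lemma approx_coord:
  fixes y R :: real and p :: nat
  assumes R: "R > 0" and y: "\<bar>y\<bar> \<le> R" and p: "p > 0"
  shows "\<exists>k<p. \<bar>y - R*sin (ang p k)\<bar> \<le> R*pi/p \<and> \<bar>R - R*cos (ang p k)\<bar> \<le> y^2/R + R*pi/p"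
proof -
  define t where "t = y / R"
  have t1: "-1 \<le> t" "t \<le> 1" using R y by (auto simp: t_def abs_le_iff field_simps)
  define \<theta>0 where "\<theta>0 = arcsin t"
  define j where "j = round (real p * \<theta>0 / (2*pi))"
  define \<theta> where "\<theta> = 2*pi*of_int j / real p"
  define k where "k = nat (j mod int p)"
  have kp: "k < p" using p by (simp add: k_def nat_less_iff)
  have rk: "real k = of_int (j mod int p)" using p by (simp add: k_def)
  have "\<theta> = 2*pi*(of_int (j mod int p) + real p * of_int (j div int p)) / real p"
    unfolding \<theta>_def by (metis mod_div_mult_eq of_int_add of_int_mult of_int_of_nat_eq add.commute mult.commute)
  also have "\<dots> = ang p k + 2*pi*of_int (j div int p)"
    using p unfolding ang_def rk by (simp add: field_simps)
  finally have th: "\<theta> = ang p k + 2*pi*of_int (j div int p)" .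
  have sk: "sin (ang p k) = sin \<theta>" and ck: "cos (ang p k) = cos \<theta>"
    by (simp_all only: th sin_per cos_per)
  have "\<theta> - \<theta>0 = (2*pi/real p) * (of_int j - real p * \<theta>0 / (2*pi))"
    using p unfolding \<theta>_def by (simp add: field_simps)
  then have "\<bar>\<theta> - \<theta>0\<bar> = (2*pi/real p) * \<bar>of_int j - real p * \<theta>0 / (2*pi)\<bar>"
    by (simp add: abs_mult)
  also have "\<dots> \<le> (2*pi/real p) * (1/2)"
    unfolding j_def by (intro mult_left_mono of_int_round_abs_le) auto
  finally have d: "\<bar>\<theta> - \<theta>0\<bar> \<le> pi / real p" by simp
  have s0: "sin \<theta>0 = t" using t1 by (simp add: \<theta>0_def)
  have c0: "cos \<theta>0 = sqrt (1 - t^2)" using t1 by (simp add: \<theta>0_def cos_arcsin)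
  have "y - R*sin \<theta> = R*(sin \<theta>0 - sin \<theta>)" using R by (simp add: s0 t_def field_simps)
  then have "\<bar>y - R*sin \<theta>\<bar> = R * \<bar>sin \<theta>0 - sin \<theta>\<bar>"
    using R by (simp add: abs_mult)
  also have "\<dots> \<le> R * \<bar>\<theta>0 - \<theta>\<bar>" using R by (intro mult_left_mono sin_lip) auto
  also have "\<dots> \<le> R * (pi / p)" using R d by (intro mult_left_mono) auto
  finally have e1: "\<bar>y - R*sin \<theta>\<bar> \<le> R*pi/p" by simp
  have u01: "0 \<le> 1 - t^2" "1 - t^2 \<le> 1" using t1 by (auto simp: abs_square_le_1)
  have "1 - t^2 \<le> sqrt (1 - t^2)"
  proof -
    have "sqrt (1 - t^2) \<le> 1" using u01 by simp
    then have "sqrt (1 - t^2) * sqrt (1 - t^2) \<le> sqrt (1 - t^2)"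
      using u01 by (metis mult_left_le real_sqrt_ge_zero)
    moreover have "sqrt (1 - t^2) * sqrt (1 - t^2) = 1 - t^2" using u01 by (simp add: real_sqrt_mult_self)
    ultimately show ?thesis by linarith
  qed
  then have c0b: "0 \<le> 1 - cos \<theta>0 \<and> 1 - cos \<theta>0 \<le> t^2" using c0 u01 by auto
  have "\<bar>R - R*cos \<theta>\<bar> = R * \<bar>(1 - cos \<theta>0) + (cos \<theta>0 - cos \<theta>)\<bar>"
    using R by (simp add: abs_mult algebra_simps)
  also have "\<dots> \<le> R * (t^2 + \<bar>\<theta>0 - \<theta>\<bar>)"
    using R c0b cos_lip[of \<theta>0 \<theta>] by (intro mult_left_mono) (auto simp: abs_le_iff)
  also have "\<dots> \<le> R * (t^2 + pi/p)" using R d by (intro mult_left_mono) auto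
  also have "\<dots> = y^2/R + R*pi/p" using R by (simp add: t_def field_simps power2_eq_square)
  finally have e2: "\<bar>R - R*cos \<theta>\<bar> \<le> y^2/R + R*pi/p" .
  show ?thesis using kp e1 e2 sk ck by auto
qed


theorem theorem5:
  fixes n :: nat and A :: "(nat \<Rightarrow> real) set" and \<delta> :: real
  assumes "\<delta> > 0" and "finite A" and "A \<subseteq> euclid n"
  shows "\<exists>p0::nat. \<forall>p. prime p \<and> p \<ge> p0 \<longrightarrow>
           (\<exists>N\<ge>n. \<exists>s :: (nat \<Rightarrow> real) \<Rightarrow> (nat \<Rightarrow> real).
              (\<forall>a\<in>A. s a \<in> euclid N \<and> edist N a (s a) < \<delta>) \<and> sub_p_toral p N (s ` A))"
proof -
  define \<epsilon> where "\<epsilon> = \<delta> / (2*n+1)"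
  have eps: "\<epsilon> > 0" using assms(1) by (simp add: \<epsilon>_def)
  define M where "M = (\<Sum>a\<in>A. \<Sum>i<n. \<bar>a i\<bar>)"
  have M0: "M \<ge> 0" unfolding M_def by (intro sum_nonneg) auto
  have Mb: "\<bar>a i\<bar> \<le> M" if "a \<in> A" "i < n" for a i
  proof -
    have "\<bar>a i\<bar> \<le> (\<Sum>i<n. \<bar>a i\<bar>)" using that by (intro member_le_sum) auto
    also have "\<dots> \<le> M" unfolding M_def using that assms(2)
      by (intro member_le_sum[where f = "\<lambda>a. \<Sum>i<n. \<bar>a i\<bar>"]) (auto intro: sum_nonneg)
    finally show ?thesis .
  qed
  define R where "R = M + 1 + 2*M^2/\<epsilon>"
  have M2: "2*M^2/\<epsilon> \<ge> 0" using eps by simp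
  have R0: "R > 0" and RM: "R \<ge> M" using M0 M2 by (auto simp: R_def)
  have "2*M^2/\<epsilon> \<le> R" using M0 by (simp add: R_def)
  then have MR: "M^2/R \<le> \<epsilon>/2" using eps R0 by (simp add: field_simps)
  define p0 where "p0 = nat \<lceil>2*pi*R/\<epsilon>\<rceil> + 1"
  show ?thesis
  proof (rule exI[of _ p0], intro allI impI)
    fix p :: nat assume pp: "prime p \<and> p \<ge> p0"
    have p: "p > 0" using pp prime_gt_0_nat by blast
    have "real p \<ge> real p0" using pp by simp
    moreover have "real p0 \<ge> 2*pi*R/\<epsilon>" unfolding p0_def
      by (metis of_nat_add of_nat_nat le_add_same_cancel1 real_nat_ceiling_ge order_trans zero_le_one of_nat_1 add_increasing2 le_nat_iff of_nat_le_iff)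
    ultimately have "real p \<ge> 2*pi*R/\<epsilon>" by linarith
    then have Rp: "R*pi/p \<le> \<epsilon>/2" using eps p by (simp add: field_simps)
    have ex: "\<exists>k. k<p \<and> \<bar>a i - R*sin (ang p k)\<bar> \<le> \<epsilon> \<and> \<bar>R - R*cos (ang p k)\<bar> \<le> \<epsilon>"
      if "a \<in> A" "i < n" for a i
    proof -
      have ai: "\<bar>a i\<bar> \<le> R" using Mb[OF that] RM by linarith
      obtain k where k: "k < p" "\<bar>a i - R*sin (ang p k)\<bar> \<le> R*pi/p"
        "\<bar>R - R*cos (ang p k)\<bar> \<le> (a i)^2/R + R*pi/p"
        using approx_coord[OF R0 ai p] by blast
      have "(a i)^2 \<le> M^2" using power_mono[OF Mb[OF that], of 2] by simp
      then have "(a i)^2/R \<le> M^2/R" using R0 by (simp add: divide_right_mono)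
      then show ?thesis using k Rp MR eps by (intro exI[of _ k] conjI; linarith)
    qed
    define K where "K (a::nat\<Rightarrow>real) (i::nat) = (SOME k::nat. k<p \<and> \<bar>a i - R*sin (ang p k)\<bar> \<le> \<epsilon> \<and> \<bar>R - R*cos (ang p k)\<bar> \<le> \<epsilon>)" for a i
    have K: "K a i < p \<and> \<bar>a i - R*sin (ang p (K a i))\<bar> \<le> \<epsilon> \<and> \<bar>R - R*cos (ang p (K a i))\<bar> \<le> \<epsilon>"
      if "a \<in> A" "i < n" for a i
      unfolding K_def by (rule someI_ex) (rule ex[OF that])
    define kk where "kk a = (\<lambda>i. if i < n then K a i else 0)" for a
    define s where "s a = rotact p n R (kk a) (\<lambda>_. 0)" for a
    have z: "(\<lambda>_. 0::real) \<in> euclid (2*n)" by (simp add: euclid_def)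
    have s_lo: "s a i = R * sin (ang p (K a i))" if "i < n" for a i
      using that z by (simp add: s_def kk_def rotact_def)
    have s_hi: "s a (n+i) = R - R * cos (ang p (K a i))" if "i < n" for a i
      using that z by (simp add: s_def kk_def rotact_def)
    have s_in: "s a \<in> euclid (2*n)" for a using rotact_in[OF z] by (simp add: s_def)
    have dist: "edist (2*n) a (s a) < \<delta>" if a: "a \<in> A" for a
    proof -
      have a0: "a (n+i) = 0" for i using a assms(3) by (auto simp: euclid_def)
      have "edist (2*n) a (s a) = L2_set (\<lambda>i. a i - s a i) {..<2*n}"
        by (simp add: edist_def L2_set_def)
      also have "\<dots> \<le> (\<Sum>i<2*n. \<bar>a i - s a i\<bar>)" by (rule L2_set_le_sum_abs)
      also have "\<dots> = (\<Sum>i<n. \<bar>a i - s a i\<bar> + \<bar>a (n+i) - s a (n+i)\<bar>)"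
        using sum_split2[of "\<lambda>i. \<bar>a i - s a i\<bar>" n n] by (simp add: mult_2 sum.distrib)
      also have "\<dots> \<le> (\<Sum>i<n. \<epsilon> + \<epsilon>)"
      proof (rule sum_mono)
        fix i assume "i \<in> {..<n}"
        then have i: "i < n" by simp
        have "\<bar>a (n+i) - s a (n+i)\<bar> = \<bar>R - R * cos (ang p (K a i))\<bar>"
          using a0 s_hi[OF i] by simp
        then show "\<bar>a i - s a i\<bar> + \<bar>a (n+i) - s a (n+i)\<bar> \<le> \<epsilon> + \<epsilon>"
          using K[OF a i] s_lo[OF i] by simp
      qed
      also have "\<dots> = 2 * real n * \<epsilon>" by simp
      also have "\<dots> < \<delta>" using assms(1) unfolding \<epsilon>_def by (simp add: field_simps)
      finally show ?thesis .
    qed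
    have kk_in: "kk a \<in> carrier (Zp_power p (n+1))" if "a \<in> A" for a
      using K[OF that] p by (auto simp: kk_def Zp_power_def)
    have t1: "s ` A \<subseteq> euclid (2*n)" using s_in by auto
    have t2: "p_torus p (Zp_power p (n+1))" unfolding p_torus_def
      using Zp_group[OF p] by (intro conjI exI[of _ "n+1"]) auto
    have t3: "isometric_action (Zp_power p (n+1)) (2*n) (rotact p n R)"
      unfolding isometric_action_def using rotact_action[OF p] rotact_isom by blast
    have t4: "s ` A \<subseteq> orbit (Zp_power p (n+1)) (rotact p n R) (\<lambda>_. 0)"
      using kk_in by (auto simp: orbit_def s_def)
    have toral: "sub_p_toral p (2*n) (s ` A)"
      unfolding sub_p_toral_def using t1 t2 t3 t4 z by blast
    have "\<forall>a\<in>A. s a \<in> euclid (2*n) \<and> edist (2*n) a (s a) < \<delta>" using s_in dist by blast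
    then show "\<exists>N\<ge>n. \<exists>s :: (nat \<Rightarrow> real) \<Rightarrow> (nat \<Rightarrow> real).
              (\<forall>a\<in>A. s a \<in> euclid N \<and> edist N a (s a) < \<delta>) \<and> sub_p_toral p N (s ` A)"
      using toral by (intro exI[of _ "2*n"] conjI) auto
  qed
qed

end
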